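(* Let $\mathcal{S}_n\subseteq\mathcal{T}$ have $n$ elements, with empirical loss $L_n$, and let $\mathbf{w}_n^*$ be the minimizer of $R_n(\mathbf{w})=L_n(\mathbf{w})+\frac{cV_n}{2}\|\mathbf{w}\|^2$. Let $\mathbf{w}^*$ be a minimizer of the expected loss $L$. Then $$\mathbb{E}\left[\|\mathbf{w}_n^*\|^2\right]\le\frac4c+\|\mathbf{w}^*\|^2 .$$
   Context: Let $Z$ be a random variable with distribution $P$ on a space $\mathcal{Z}$ and $f:\mathbb{R}^p\times\mathcal{Z}\to\mathbb{R}$ a loss function; $L(\mathbf{w})=\mathbb{E}_Z[f(\mathbf{w},Z)]$. The training set $\mathcal{T}=\{z_1,\dots,z_N\}$ consists of $N$ independent samples from $P$; for a (fixed, data-independent) subset $\mathcal{S}_n$ with $n$ elements, $L_n(\mathbf{w})=\frac1n\sum_{z\in\mathcal{S}_n}f(\mathbf{w},z)$. Standing assumption: there are positive constants $V_k$ such that for every $k$ and every set $\mathcal{S}$ of $k$ independent samples from $P$, $\mathbb{E}[\sup_{\mathbf{w}}|L(\mathbf{w})-L_{\mathcal{S}}(\mathbf{w})|]\le V_k$ (expectation over the samples). $c>0$ is a constant. Assumption: for every $z$, $f(\cdot,z)$ is convex with $M$-Lipschitz continuous gradient. *)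

theory Defs
  imports "HOL-Probability.Probability"
begin

definition exp_loss :: "'z measure \<Rightarrow> ('w \<Rightarrow> 'z \<Rightarrow> real) \<Rightarrow> 'w \<Rightarrow> real" where
  "exp_loss P f w = (\<integral>z. f w z \<partial>P)"

definition emp_loss :: "('w \<Rightarrow> 'z \<Rightarrow> real) \<Rightarrow> nat \<Rightarrow> (nat \<Rightarrow> 'z) \<Rightarrow> 'w \<Rightarrow> real" where
  "emp_loss f k zs w = (\<Sum>i<k. f w (zs i)) / real k"

abbreviation sample_measure :: "nat \<Rightarrow> 'z measure \<Rightarrow> (nat \<Rightarrow> 'z) measure" where
  "sample_measure k P \<equiv> PiM {..<k} (\<lambda>_. P)"

definition lipschitz_gradient :: "real \<Rightarrow> ('a::real_inner \<Rightarrow> real) \<Rightarrow> bool" where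
  "lipschitz_gradient M g \<longleftrightarrow> (\<exists>G. (\<forall>w. (g has_derivative (\<lambda>h. G w \<bullet> h)) (at w)) \<and>
      (\<forall>v w. norm (G w - G v) \<le> M * norm (w - v)))"

end

theory Submission
  imports Defs
begin

theorem lemma6:
  fixes P :: "'z measure" and f :: "real^'p \<Rightarrow> 'z \<Rightarrow> real"
    and V :: "nat \<Rightarrow> real" and c M :: real and n :: nat
    and wn :: "(nat \<Rightarrow> 'z) \<Rightarrow> real^'p" and wstar :: "real^'p"
  assumes "prob_space P"
    and "c > 0"
    and "\<forall>z. convex_on UNIV (\<lambda>w. f w z) \<and> lipschitz_gradient M (\<lambda>w. f w z)"
    and "\<forall>w. integrable P (f w)"
    and "\<forall>k. V k > 0"
    and "\<forall>k\<ge>1. (\<lambda>zs. SUP w. ennreal \<bar>exp_loss P f w - emp_loss f k zs w\<bar>)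
                   \<in> borel_measurable (sample_measure k P)
             \<and> (\<integral>\<^sup>+ zs. (SUP w. ennreal \<bar>exp_loss P f w - emp_loss f k zs w\<bar>)
                   \<partial>sample_measure k P) \<le> ennreal (V k)"
    and "n \<ge> 1"
    and "\<forall>zs\<in>space (sample_measure n P). \<forall>w.
           emp_loss f n zs (wn zs) + c * V n / 2 * norm (wn zs) ^ 2
             \<le> emp_loss f n zs w + c * V n / 2 * norm w ^ 2"
    and "wn \<in> borel_measurable (sample_measure n P)"
    and "\<forall>w. exp_loss P f wstar \<le> exp_loss P f w"
  shows "(\<integral>\<^sup>+ zs. ennreal (norm (wn zs) ^ 2) \<partial>sample_measure n P)
           \<le> ennreal (4 / c + norm wstar ^ 2)"
proof -
  define D where "D = (\<lambda>zs. SUP w. ennreal \<bar>exp_loss P f w - emp_loss f n zs w\<bar>)"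
  define K where "K = 4 / (c * V n)"
  have Vp: "V n > 0" using assms(5) by auto
  have Kp: "K > 0" using Vp assms(2) by (simp add: K_def)
  have Dm: "D \<in> borel_measurable (sample_measure n P)" and DI: "(\<integral>\<^sup>+ zs. D zs \<partial>sample_measure n P) \<le> ennreal (V n)"
    using assms(6) assms(7) by (auto simp: D_def)
  interpret ps: prob_space "sample_measure n P"
    by (intro prob_space_PiM) (simp add: assms(1))
  have pw: "ennreal (norm (wn zs) ^ 2) \<le> ennreal (norm wstar ^ 2) + ennreal K * D zs"
    if zs: "zs \<in> space (sample_measure n P)" for zs
  proof -
    define d1 where "d1 = \<bar>exp_loss P f (wn zs) - emp_loss f n zs (wn zs)\<bar>"
    define d2 where "d2 = \<bar>exp_loss P f wstar - emp_loss f n zs wstar\<bar>"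
    have d1D: "ennreal d1 \<le> D zs" unfolding D_def d1_def by (rule SUP_upper) auto
    have d2D: "ennreal d2 \<le> D zs" unfolding D_def d2_def by (rule SUP_upper) auto
    have opt: "emp_loss f n zs (wn zs) + c * V n / 2 * norm (wn zs) ^ 2
             \<le> emp_loss f n zs wstar + c * V n / 2 * norm wstar ^ 2" using assms(8) zs by blast
    have "exp_loss P f wstar \<le> exp_loss P f (wn zs)" using assms(10) by blast
    hence "c * V n / 2 * norm (wn zs) ^ 2 \<le> c * V n / 2 * norm wstar ^ 2 + d1 + d2"
      using opt unfolding d1_def d2_def by linarith
    hence "norm (wn zs) ^ 2 \<le> norm wstar ^ 2 + (K/2) * (d1 + d2)"
      using Vp assms(2) by (simp add: K_def field_simps)
    hence "ennreal (norm (wn zs) ^ 2) \<le> ennreal (norm wstar ^ 2 + (K/2) * (d1 + d2))"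
      by (rule ennreal_leI)
    also have "\<dots> = ennreal (norm wstar ^ 2) + ennreal (K/2) * (ennreal d1 + ennreal d2)"
      using Kp by (simp add: d1_def d2_def ennreal_plus[symmetric] ennreal_mult[symmetric] del: ennreal_plus)
    also have "\<dots> \<le> ennreal (norm wstar ^ 2) + ennreal (K/2) * (D zs + D zs)"
      by (intro add_left_mono mult_left_mono add_mono d1D d2D) auto
    also have "ennreal (K/2) * (D zs + D zs) = ennreal K * D zs"
    proof -
      have "D zs + D zs = ennreal 2 * D zs" by (simp add: mult_2)
      moreover have "ennreal (K/2) * ennreal 2 = ennreal K"
      proof -
        have "ennreal (K/2) * ennreal 2 = ennreal (K/2 * 2)" using Kp by (intro ennreal_mult[symmetric]) auto
        thus ?thesis by simp
      qed
      ultimately show ?thesis by (simp add: mult.assoc[symmetric])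
    qed
    finally show ?thesis .
  qed
  have "(\<integral>\<^sup>+ zs. ennreal (norm (wn zs) ^ 2) \<partial>sample_measure n P)
        \<le> (\<integral>\<^sup>+ zs. ennreal (norm wstar ^ 2) + ennreal K * D zs \<partial>sample_measure n P)"
    by (rule nn_integral_mono) (rule pw)
  also have "\<dots> = ennreal (norm wstar ^ 2) + ennreal K * (\<integral>\<^sup>+ zs. D zs \<partial>sample_measure n P)"
    using Dm by (simp add: nn_integral_add nn_integral_cmult ps.emeasure_space_1)
  also have "\<dots> \<le> ennreal (norm wstar ^ 2) + ennreal K * ennreal (V n)"
    by (intro add_left_mono mult_left_mono DI) auto
  also have "\<dots> = ennreal (4 / c + norm wstar ^ 2)"
    using Vp Kp assms(2) by (simp add: ennreal_mult[symmetric] ennreal_plus[symmetric] K_def add.commute del: ennreal_plus)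
  finally show ?thesis .
qed

end
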